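(* Let $\mathcal H$ be an $As^c$-$Mag$-bialgebra, $x\in\mathrm{Prim}\,\mathcal H$ and $y,z\in\bar{\mathcal H}$. Writing $\delta(z)=\sum z_{(1)}\otimes z_{(2)}$, one has $$\delta(as(x,y,z))=\sum as(x,y,z_{(1)})\otimes z_{(2)}.$$
   Context: An $As^c$-$Mag$-bialgebra is a vector space $\mathcal H$ over a field $\mathbb K$ with a bilinear product $\cdot$ (not assumed associative) with two-sided unit $1$ and a coassociative counital coproduct $\Delta$ with $\Delta(1)=1\otimes1$ and $\Delta(x\cdot y)=\Delta(x)\cdot(1\otimes y)+(x\otimes1)\cdot\Delta(y)-x\otimes y$, the product on $\mathcal H\otimes\mathcal H$ being componentwise. $\bar{\mathcal H}$ is the kernel of the counit, $\delta(x)=\Delta(x)-x\otimes1-1\otimes x$ is the reduced coproduct on $\bar{\mathcal H}$, and $\mathrm{Prim}\,\mathcal H=\ker\delta$. The associator is $as(x,y,z)=(x\cdot y)\cdot z-x\cdot(y\cdot z)$. *)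

theory Defs
  imports Complex_Main "HOL-Library.Function_Algebras"
begin

text \<open>
  The algebraic tensor products
  H (x) H and H (x) H (x) H are constructed literally: an element is represented by a
  finite formal sum of elementary tensors (a list of pairs / triples), and two
  representatives denote the same tensor iff the difference of the associated formal
  linear combinations lies in the span of the multilinearity relations (the usual
  quotient construction of the tensor product).
\<close>

definition fscale :: "'k::field \<Rightarrow> ('a \<Rightarrow> 'k) \<Rightarrow> ('a \<Rightarrow> 'k)" where
  "fscale c f = (\<lambda>p. c * f p)"

definition basisv :: "'a \<Rightarrow> 'a \<Rightarrow> 'k::field" where
  "basisv p = (\<lambda>q. if q = p then 1 else 0)"

definition formal :: "'a list \<Rightarrow> 'a \<Rightarrow> 'k::field" where
  "formal ts = (\<lambda>p. of_nat (count_list ts p))"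

definition tensor2_rels :: "('k::field \<Rightarrow> 'h::ab_group_add \<Rightarrow> 'h) \<Rightarrow> ('h \<times> 'h \<Rightarrow> 'k) set" where
  "tensor2_rels sc =
     {basisv (a + a', b) - basisv (a, b) - basisv (a', b) | a a' b. True}
   \<union> {basisv (a, b + b') - basisv (a, b) - basisv (a, b') | a b b'. True}
   \<union> {basisv (sc c a, b) - fscale c (basisv (a, b)) | c a b. True}
   \<union> {basisv (a, sc c b) - fscale c (basisv (a, b)) | c a b. True}"

definition tensor3_rels :: "('k::field \<Rightarrow> 'h::ab_group_add \<Rightarrow> 'h) \<Rightarrow> ('h \<times> 'h \<times> 'h \<Rightarrow> 'k) set" where
  "tensor3_rels sc =
     {basisv (a + a', b, d) - basisv (a, b, d) - basisv (a', b, d) | a a' b d. True}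
   \<union> {basisv (a, b + b', d) - basisv (a, b, d) - basisv (a, b', d) | a b b' d. True}
   \<union> {basisv (a, b, d + d') - basisv (a, b, d) - basisv (a, b, d') | a b d d'. True}
   \<union> {basisv (sc c a, b, d) - fscale c (basisv (a, b, d)) | c a b d. True}
   \<union> {basisv (a, sc c b, d) - fscale c (basisv (a, b, d)) | c a b d. True}
   \<union> {basisv (a, b, sc c d) - fscale c (basisv (a, b, d)) | c a b d. True}"

definition teq2 :: "('k::field \<Rightarrow> 'h::ab_group_add \<Rightarrow> 'h) \<Rightarrow> ('h \<times> 'h) list \<Rightarrow> ('h \<times> 'h) list \<Rightarrow> bool" where
  "teq2 sc ts us \<longleftrightarrow>
     (formal ts - formal us :: 'h \<times> 'h \<Rightarrow> 'k) \<in> module.span fscale (tensor2_rels sc)"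

definition teq3 :: "('k::field \<Rightarrow> 'h::ab_group_add \<Rightarrow> 'h) \<Rightarrow> ('h \<times> 'h \<times> 'h) list \<Rightarrow> ('h \<times> 'h \<times> 'h) list \<Rightarrow> bool" where
  "teq3 sc ts us \<longleftrightarrow>
     (formal ts - formal us :: 'h \<times> 'h \<times> 'h \<Rightarrow> 'k) \<in> module.span fscale (tensor3_rels sc)"

definition tmult :: "('h \<Rightarrow> 'h \<Rightarrow> 'h) \<Rightarrow> ('h \<times> 'h) list \<Rightarrow> ('h \<times> 'h) list \<Rightarrow> ('h \<times> 'h) list" where
  "tmult m ts us = concat (map (\<lambda>(a, b). map (\<lambda>(c, d). (m a c, m b d)) us) ts)"

definition bilinear_op :: "('k::field \<Rightarrow> 'h::ab_group_add \<Rightarrow> 'h) \<Rightarrow> ('h \<Rightarrow> 'h \<Rightarrow> 'h) \<Rightarrow> bool" where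
  "bilinear_op sc m \<longleftrightarrow>
     (\<forall>x x' y. m (x + x') y = m x y + m x' y) \<and>
     (\<forall>x y y'. m x (y + y') = m x y + m x y') \<and>
     (\<forall>c x y. m (sc c x) y = sc c (m x y)) \<and>
     (\<forall>c x y. m x (sc c y) = sc c (m x y))"

definition AsMag_bialgebra ::
  "('k::field \<Rightarrow> 'h::ab_group_add \<Rightarrow> 'h) \<Rightarrow> ('h \<Rightarrow> 'h \<Rightarrow> 'h) \<Rightarrow> 'h \<Rightarrow>
   ('h \<Rightarrow> ('h \<times> 'h) list) \<Rightarrow> ('h \<Rightarrow> 'k) \<Rightarrow> bool" where
  "AsMag_bialgebra sc m one Delta eps \<longleftrightarrow>
     vector_space sc \<and>
     bilinear_op sc m \<and>
     (\<forall>x. m one x = x \<and> m x one = x) \<and>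
     \<comment> \<open>Delta is a linear map H -> H (x) H\<close>
     (\<forall>x y. teq2 sc (Delta (x + y)) (Delta x @ Delta y)) \<and>
     (\<forall>c x. teq2 sc (Delta (sc c x)) (map (\<lambda>(a, b). (sc c a, b)) (Delta x))) \<and>
     \<comment> \<open>coassociativity: (Delta (x) id) Delta = (id (x) Delta) Delta\<close>
     (\<forall>x. teq3 sc (concat (map (\<lambda>(a, b). map (\<lambda>(c, d). (c, d, b)) (Delta a)) (Delta x)))
                  (concat (map (\<lambda>(a, b). map (\<lambda>(c, d). (a, c, d)) (Delta b)) (Delta x)))) \<and>
     \<comment> \<open>eps is a linear form and a counit\<close>
     (\<forall>x y. eps (x + y) = eps x + eps y) \<and>
     (\<forall>c x. eps (sc c x) = c * eps x) \<and>
     (\<forall>x. sum_list (map (\<lambda>(a, b). sc (eps a) b) (Delta x)) = x) \<and>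
     (\<forall>x. sum_list (map (\<lambda>(a, b). sc (eps b) a) (Delta x)) = x) \<and>
     \<comment> \<open>Delta(1) = 1 (x) 1\<close>
     teq2 sc (Delta one) [(one, one)] \<and>
     \<comment> \<open>Delta(x.y) = Delta(x).(1 (x) y) + (x (x) 1).Delta(y) - x (x) y\<close>
     (\<forall>x y. teq2 sc (Delta (m x y))
               (tmult m (Delta x) [(one, y)] @ tmult m [(x, one)] (Delta y) @ [(sc (-1) x, y)]))"

text \<open>Reduced coproduct delta(x) = Delta(x) - x (x) 1 - 1 (x) x (a representative).\<close>
definition rcop :: "('k::field \<Rightarrow> 'h::ab_group_add \<Rightarrow> 'h) \<Rightarrow> 'h \<Rightarrow> ('h \<Rightarrow> ('h \<times> 'h) list) \<Rightarrow> 'h \<Rightarrow> ('h \<times> 'h) list" where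
  "rcop sc one Delta x = Delta x @ [(sc (-1) x, one), (sc (-1) one, x)]"

definition assoc :: "('h \<Rightarrow> 'h \<Rightarrow> 'h::ab_group_add) \<Rightarrow> 'h \<Rightarrow> 'h \<Rightarrow> 'h \<Rightarrow> 'h" where
  "assoc m x y z = m (m x y) z - m x (m y z)"

end

theory Submission
  imports Defs
begin

lemma module_fscale: "module (fscale :: 'k::field \<Rightarrow> ('a \<Rightarrow> 'k) \<Rightarrow> ('a \<Rightarrow> 'k))"
  by unfold_locales (simp_all add: fscale_def fun_eq_iff algebra_simps)

abbreviation S2 :: "('k::field \<Rightarrow> 'h::ab_group_add \<Rightarrow> 'h) \<Rightarrow> ('h \<times> 'h \<Rightarrow> 'k) set" where
  "S2 sc \<equiv> module.span fscale (tensor2_rels sc)"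

lemmas sp_add = module.span_add[OF module_fscale]
lemmas sp_diff = module.span_diff[OF module_fscale]
lemmas sp_neg = module.span_neg[OF module_fscale]
lemmas sp_zero = module.span_zero[OF module_fscale]
lemmas sp_base = module.span_base[OF module_fscale]
lemmas sp_scale = module.span_scale[OF module_fscale]
lemmas sp_induct = module.span_induct_alt[OF module_fscale]

lemma formal_Nil[simp]: "formal [] = 0"
  by (simp add: formal_def fun_eq_iff)

lemma formal_Cons[simp]: "formal (p # ts) = basisv p + formal ts"
  by (simp add: formal_def basisv_def fun_eq_iff)

lemma formal_append[simp]: "formal (ts @ us) = formal ts + formal us"
  by (induction ts) (simp_all add: algebra_simps)

definition push :: "('a \<Rightarrow> 'b) \<Rightarrow> ('a \<Rightarrow> 'k::field) \<Rightarrow> ('b \<Rightarrow> 'k)" where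
  "push F v = (\<lambda>q. \<Sum>p\<in>{p. v p \<noteq> 0 \<and> F p = q}. v p)"

definition finsupp :: "('a \<Rightarrow> 'k::field) \<Rightarrow> bool" where
  "finsupp v \<longleftrightarrow> finite {p. v p \<noteq> 0}"

lemma push_eq:
  assumes "finite T" "{p. v p \<noteq> 0 \<and> F p = q} \<subseteq> T" "T \<subseteq> {p. F p = q}"
  shows "push F v q = sum v T"
  unfolding push_def using assms
  by (intro sum.mono_neutral_left) auto

lemma push_add:
  assumes "finsupp v" "finsupp w"
  shows "push F (v + w) = push F v + push F w"
proof
  fix q
  let ?T = "({p. v p \<noteq> 0} \<union> {p. w p \<noteq> 0}) \<inter> {p. F p = q}"
  have f: "finite ?T" using assms by (simp add: finsupp_def)
  have "push F (v + w) q = sum (v + w) ?T" by (rule push_eq[OF f]) auto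
  moreover have "push F v q = sum v ?T" by (rule push_eq[OF f]) auto
  moreover have "push F w q = sum w ?T" by (rule push_eq[OF f]) auto
  ultimately show "push F (v + w) q = (push F v + push F w) q"
    by (simp add: sum.distrib)
qed

lemma push_diff:
  assumes "finsupp v" "finsupp w"
  shows "push F (v - w) = push F v - push F w"
proof
  fix q
  let ?T = "({p. v p \<noteq> 0} \<union> {p. w p \<noteq> 0}) \<inter> {p. F p = q}"
  have f: "finite ?T" using assms by (simp add: finsupp_def)
  have "push F (v - w) q = sum (v - w) ?T" by (rule push_eq[OF f]) auto
  moreover have "push F v q = sum v ?T" by (rule push_eq[OF f]) auto
  moreover have "push F w q = sum w ?T" by (rule push_eq[OF f]) auto
  ultimately show "push F (v - w) q = (push F v - push F w) q"
    by (simp add: sum_subtractf)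
qed

lemma push_zero[simp]: "push F 0 = 0"
  by (simp add: push_def fun_eq_iff)

lemma push_scale: "push F (fscale c v) = fscale c (push F v)"
proof (cases "c = 0")
  case True
  then show ?thesis by (simp add: push_def fscale_def fun_eq_iff)
next
  case False
  then show ?thesis by (simp add: push_def fscale_def fun_eq_iff sum_distrib_left)
qed

lemma push_basisv[simp]: "push F (basisv p :: _ \<Rightarrow> 'k::field) = basisv (F p)"
proof
  fix q
  have "{p'. basisv p p' \<noteq> (0::'k::field) \<and> F p' = q} = (if F p = q then {p} else {})"
    by (auto simp: basisv_def)
  then show "push F (basisv p :: _ \<Rightarrow> 'k) q = basisv (F p) q"
    by (simp add: push_def basisv_def)
qed

lemma finsupp_add: "finsupp v \<Longrightarrow> finsupp w \<Longrightarrow> finsupp (v + w)"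
  unfolding finsupp_def by (rule finite_subset[of _ "{p. v p \<noteq> 0} \<union> {p. w p \<noteq> 0}"]) auto

lemma finsupp_diff: "finsupp v \<Longrightarrow> finsupp w \<Longrightarrow> finsupp (v - w)"
  unfolding finsupp_def by (rule finite_subset[of _ "{p. v p \<noteq> 0} \<union> {p. w p \<noteq> 0}"]) auto

lemma finsupp_scale: "finsupp v \<Longrightarrow> finsupp (fscale c v)"
  unfolding finsupp_def fscale_def by (rule finite_subset[of _ "{p. v p \<noteq> 0}"]) auto

lemma finsupp_basisv: "finsupp (basisv p :: _ \<Rightarrow> 'k::field)"
  unfolding finsupp_def basisv_def by (rule finite_subset[of _ "{p}"]) auto

lemma finsupp_zero: "finsupp 0"
  by (simp add: finsupp_def)

lemma finsupp_formal: "finsupp (formal ts :: _ \<Rightarrow> 'k::field)"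
  by (induction ts) (simp_all add: finsupp_zero finsupp_add finsupp_basisv del: plus_fun_apply zero_fun_apply)

lemma formal_map: "(formal (map F ts) :: _ \<Rightarrow> 'k::field) = push F (formal ts)"
  by (induction ts) (simp_all add: push_add finsupp_basisv finsupp_formal del: plus_fun_apply zero_fun_apply)

definition lin :: "('k::field \<Rightarrow> 'h::ab_group_add \<Rightarrow> 'h) \<Rightarrow> ('h \<Rightarrow> 'h) \<Rightarrow> bool" where
  "lin sc f \<longleftrightarrow> (\<forall>a a'. f (a + a') = f a + f a') \<and> (\<forall>c a. f (sc c a) = sc c (f a))"

lemma push_rels:
  assumes f: "lin sc f" and g: "lin sc g" and r: "r \<in> tensor2_rels sc"
  shows "finsupp r \<and> push (\<lambda>(a, b). (f a, g b)) r \<in> S2 sc"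
proof -
  consider (c1) a a' b where "r = basisv (a + a', b) - basisv (a, b) - basisv (a', b)"
    | (c2) a b b' where "r = basisv (a, b + b') - basisv (a, b) - basisv (a, b')"
    | (c3) c a b where "r = basisv (sc c a, b) - fscale c (basisv (a, b))"
    | (c4) c a b where "r = basisv (a, sc c b) - fscale c (basisv (a, b))"
    using r unfolding tensor2_rels_def by blast
  then show ?thesis
  proof cases
    case c1
    then show ?thesis
      using f apply (simp add: push_diff finsupp_diff finsupp_basisv lin_def del: plus_fun_apply)
      by (rule sp_base) (unfold tensor2_rels_def, blast)
  next
    case c2
    then show ?thesis
      using g apply (simp add: push_diff finsupp_diff finsupp_basisv lin_def del: plus_fun_apply)
      by (rule sp_base) (unfold tensor2_rels_def, blast)
  next
    case c3
    then show ?thesis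
      using f apply (simp add: push_diff push_scale finsupp_diff finsupp_scale finsupp_basisv lin_def del: plus_fun_apply)
      by (rule sp_base) (unfold tensor2_rels_def, blast)
  next
    case c4
    then show ?thesis
      using g apply (simp add: push_diff push_scale finsupp_diff finsupp_scale finsupp_basisv lin_def del: plus_fun_apply)
      by (rule sp_base) (unfold tensor2_rels_def, blast)
  qed
qed

lemma push_span:
  assumes f: "lin sc f" and g: "lin sc g" and v: "v \<in> S2 sc"
  shows "finsupp v \<and> push (\<lambda>(a, b). (f a, g b)) v \<in> S2 sc"
proof (rule sp_induct[OF v, where h="\<lambda>v. finsupp v \<and> push (\<lambda>(a, b). (f a, g b)) v \<in> S2 sc"])
  show "finsupp 0 \<and> push (\<lambda>(a, b). (f a, g b)) 0 \<in> S2 sc"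
    by (simp add: finsupp_zero sp_zero del: zero_fun_apply)
next
  fix c r y
  assume r0: "r \<in> tensor2_rels sc" and y: "finsupp y \<and> push (\<lambda>(a, b). (f a, g b)) y \<in> S2 sc"
  have r: "finsupp r \<and> push (\<lambda>(a, b). (f a, g b)) r \<in> S2 sc"
    by (rule push_rels[OF f g r0])
  then show "finsupp (fscale c r + y) \<and> push (\<lambda>(a, b). (f a, g b)) (fscale c r + y) \<in> S2 sc"
    using y by (simp add: push_add push_scale finsupp_add finsupp_scale sp_add sp_scale del: plus_fun_apply)
qed

lemma teq2_map:
  assumes f: "lin sc f" and g: "lin sc g" and t: "teq2 sc ts us"
  shows "teq2 sc (map (\<lambda>(a, b). (f a, g b)) ts) (map (\<lambda>(a, b). (f a, g b)) us)"
  using push_span[OF f g t[unfolded teq2_def]]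
  by (simp add: teq2_def formal_map push_diff finsupp_formal)


lemmas funapp = plus_fun_apply minus_apply uminus_apply zero_fun_apply

lemma fscale_m1: "fscale (-1) v = - v"
  by (simp add: fscale_def fun_eq_iff)

lemma rel_S: "r \<in> tensor2_rels sc \<Longrightarrow> r \<in> S2 sc"
  by (rule sp_base)

lemma el_negL:
  assumes "sc (-1) a = a'"
  shows "basisv (a', b) + basisv (a, b) \<in> S2 sc"
proof -
  have "basisv (sc (-1) a, b) - fscale (-1) (basisv (a, b)) \<in> S2 sc"
    by (rule rel_S) (unfold tensor2_rels_def, blast)
  then show ?thesis using assms by (simp add: fscale_m1 del: funapp)
qed

lemma el_negR:
  assumes "sc (-1) b = b'"
  shows "basisv (a, b') + basisv (a, b) \<in> S2 sc"
proof -
  have "basisv (a, sc (-1) b) - fscale (-1) (basisv (a, b)) \<in> S2 sc"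
    by (rule rel_S) (unfold tensor2_rels_def, blast)
  then show ?thesis using assms by (simp add: fscale_m1 del: funapp)
qed

lemma el_addL: "basisv (a + a', b) - basisv (a, b) - basisv (a', b) \<in> S2 sc"
  by (rule rel_S) (unfold tensor2_rels_def, blast)

lemma el_addR: "basisv (a, b + b') - basisv (a, b) - basisv (a, b') \<in> S2 sc"
  by (rule rel_S) (unfold tensor2_rels_def, blast)

lemma el_zeroL:
  assumes "sc 0 a = a'"
  shows "basisv (a', b) \<in> S2 sc"
proof -
  have "basisv (sc 0 a, b) - fscale 0 (basisv (a, b)) \<in> S2 sc"
    by (rule rel_S) (unfold tensor2_rels_def, blast)
  moreover have "fscale 0 (basisv (a, b)) = (0 :: _ \<Rightarrow> 'k::field)" by (simp add: fscale_def fun_eq_iff)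
  ultimately show ?thesis using assms by (metis diff_zero)
qed

lemma teq2_formal: "teq2 sc ts us \<longleftrightarrow> formal ts - formal us \<in> S2 sc"
  by (simp add: teq2_def)

lemma module_sc: "vector_space sc \<Longrightarrow> module sc"
  by (simp add: module_iff_vector_space)

lemma neg_sc:
  assumes "vector_space sc" shows "sc (-1) a = - a"
  using module.scale_minus_left[OF module_sc[OF assms], of 1 a] module.scale_one[OF module_sc[OF assms]]
  by simp

lemma L_neg:
  assumes VS: "vector_space sc"
  shows "formal (map (\<lambda>(a, b). (- a, b)) ts) + formal ts \<in> S2 sc"
proof (induction ts)
  case Nil
  then show ?case by (simp add: sp_zero del: funapp)
next
  case (Cons p ts)
  obtain a b where p: "p = (a, b)" by (cases p)
  have e: "basisv (- a, b) + basisv (a, b) \<in> S2 sc"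
    by (rule el_negL) (simp add: neg_sc[OF VS])
  have "formal (map (\<lambda>(a, b). (- a, b)) (p # ts)) + formal (p # ts)
      = (basisv (- a, b) + basisv (a, b)) + (formal (map (\<lambda>(a, b). (- a, b)) ts) + formal ts)"
    by (simp add: p algebra_simps del: funapp)
  then show ?case using sp_add[OF e Cons.IH] by (simp add: p algebra_simps del: funapp)
qed

lemma L_diff:
  assumes VS: "vector_space sc" and h: "\<And>a. h a = f a - g a"
  shows "formal (map (\<lambda>(a, b). (h a, b)) ts) - formal (map (\<lambda>(a, b). (f a, b)) ts)
           + formal (map (\<lambda>(a, b). (g a, b)) ts) \<in> S2 sc"
proof (induction ts)
  case Nil
  then show ?case by (simp add: sp_zero del: funapp)
next
  case (Cons p ts)
  obtain a b where p: "p = (a, b)" by (cases p)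
  have e1: "basisv (f a + - g a, b) - basisv (f a, b) - basisv (- g a, b) \<in> S2 sc"
    by (rule el_addL)
  have e2: "basisv (- g a, b) + basisv (g a, b) \<in> S2 sc"
    by (rule el_negL) (simp add: neg_sc[OF VS])
  have "formal (map (\<lambda>(a, b). (h a, b)) (p # ts)) - formal (map (\<lambda>(a, b). (f a, b)) (p # ts))
           + formal (map (\<lambda>(a, b). (g a, b)) (p # ts))
      = (basisv (f a + - g a, b) - basisv (f a, b) - basisv (- g a, b))
         + (basisv (- g a, b) + basisv (g a, b))
         + (formal (map (\<lambda>(a, b). (h a, b)) ts) - formal (map (\<lambda>(a, b). (f a, b)) ts)
           + formal (map (\<lambda>(a, b). (g a, b)) ts))"
    by (simp add: p h algebra_simps del: funapp)
  then show ?case using sp_add[OF sp_add[OF e1 e2] Cons.IH] by (simp add: p h algebra_simps del: funapp)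
qed

lemma tmult_right: "tmult m ts [(c, d)] = map (\<lambda>(a, b). (m a c, m b d)) ts"
  by (induction ts) (auto simp: tmult_def)

lemma tmult_left: "tmult m [(c, d)] ts = map (\<lambda>(a, b). (m c a, m d b)) ts"
  by (simp add: tmult_def)

lemma mapLR: "map (\<lambda>(a, b). (a, g b)) (map (\<lambda>(a, b). (f a, b)) ts) = map (\<lambda>(a, b). (f a, g b)) ts"
  by (induction ts) auto

lemma mapRL: "map (\<lambda>(a, b). (f a, b)) (map (\<lambda>(a, b). (a, g b)) ts) = map (\<lambda>(a, b). (f a, g b)) ts"
  by (induction ts) auto

lemma mapLL: "map (\<lambda>(a, b). (f a, b)) (map (\<lambda>(a, b). (g a, b)) ts) = map (\<lambda>(a, b). (f (g a), b)) ts"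
  by (induction ts) auto


theorem lemma2p7:
  fixes sc :: "'k::field \<Rightarrow> 'h::ab_group_add \<Rightarrow> 'h"
    and m :: "'h \<Rightarrow> 'h \<Rightarrow> 'h" and one :: 'h
    and Delta :: "'h \<Rightarrow> ('h \<times> 'h) list" and eps :: "'h \<Rightarrow> 'k"
    and x y z :: 'h and zs :: "('h \<times> 'h) list"
  assumes H: "AsMag_bialgebra sc m one Delta eps"
    and x_bar: "eps x = 0" and x_prim: "teq2 sc (rcop sc one Delta x) []"
    and y_bar: "eps y = 0" and z_bar: "eps z = 0"
    and zs: "teq2 sc zs (rcop sc one Delta z)"
  shows "teq2 sc (rcop sc one Delta (assoc m x y z)) (map (\<lambda>(a, b). (assoc m x y a, b)) zs)"
proof -
  have VS: "vector_space sc" using H by (simp add: AsMag_bialgebra_def)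
  have MS: "module sc" by (rule module_sc[OF VS])
  have BL: "bilinear_op sc m" using H by (simp add: AsMag_bialgebra_def)
  have mAL: "\<And>a a' b. m (a + a') b = m a b + m a' b" using BL by (simp add: bilinear_op_def)
  have mAR: "\<And>a b b'. m a (b + b') = m a b + m a b'" using BL by (simp add: bilinear_op_def)
  have mSL: "\<And>c a b. m (sc c a) b = sc c (m a b)" using BL by (simp add: bilinear_op_def)
  have mSR: "\<And>c a b. m a (sc c b) = sc c (m a b)" using BL by (simp add: bilinear_op_def)
  have U1: "\<And>a. m one a = a" and U2: "\<And>a. m a one = a" using H by (simp_all add: AsMag_bialgebra_def)
  have Dadd: "\<And>a b. teq2 sc (Delta (a + b)) (Delta a @ Delta b)"
    using H by (simp add: AsMag_bialgebra_def)
  have Dsc: "\<And>c a. teq2 sc (Delta (sc c a)) (map (\<lambda>(a, b). (sc c a, b)) (Delta a))"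
    using H by (simp add: AsMag_bialgebra_def)
  have Dm: "\<And>a b. teq2 sc (Delta (m a b))
      (tmult m (Delta a) [(one, b)] @ tmult m [(a, one)] (Delta b) @ [(sc (-1) a, b)])"
    using H by (simp add: AsMag_bialgebra_def)
  have neg: "\<And>a. sc (-1) a = - a" by (rule neg_sc[OF VS])
  have mneg: "\<And>a b. m a (- b) = - m a b" using mSR[of a "-1" b for a b] by (simp add: neg)
  have mnegL: "\<And>a b. m (- a) b = - m a b" using mSL[of "-1" a b for a b] by (simp add: neg)
  have linR: "\<And>c. lin sc (\<lambda>b. m b c)" using mAL mSL by (simp add: lin_def)
  have linL: "\<And>c. lin sc (m c)" using mAR mSR by (simp add: lin_def)
  have linId: "lin sc (\<lambda>b. b)" by (simp add: lin_def)
  have linAs: "lin sc (assoc m x y)"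
    unfolding lin_def assoc_def
    using mAR mSR module.scale_right_diff_distrib[OF MS] by (simp add: algebra_simps)
  have asneg: "\<And>a. assoc m x y (- a) = - assoc m x y a" by (simp add: assoc_def mneg)
  have asone: "assoc m x y one = 0" by (simp add: assoc_def U2)

  have B: "\<And>u v. teq2 sc (Delta (m u v)) (map (\<lambda>(a, b). (a, m b v)) (Delta u)
             @ map (\<lambda>(a, b). (m u a, b)) (Delta v) @ [(- u, v)])"
    using Dm by (simp add: tmult_right tmult_left U1 U2 neg)
  have F1: "teq2 sc (Delta x) [(x, one), (one, x)]"
  proof -
    have P: "formal (Delta x) + (basisv (- x, one) + basisv (- one, x)) \<in> S2 sc"
      using x_prim by (simp add: teq2_formal rcop_def neg del: funapp)
    have k1: "basisv (- x, one) + basisv (x, one) \<in> S2 sc" by (rule el_negL) (simp add: neg)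
    have k2: "basisv (- one, x) + basisv (one, x) \<in> S2 sc" by (rule el_negL) (simp add: neg)
    show ?thesis using sp_diff[OF sp_diff[OF P k1] k2]
      by (simp add: teq2_formal algebra_simps del: funapp)
  qed
  have A: "\<And>u. teq2 sc (Delta (m x u)) ((one, m x u) # map (\<lambda>(a, b). (m x a, b)) (Delta u))"
  proof -
    fix u
    have b: "formal (Delta (m x u)) - formal (map (\<lambda>(a, b). (a, m b u)) (Delta x)
             @ map (\<lambda>(a, b). (m x a, b)) (Delta u) @ [(- x, u)]) \<in> S2 sc"
      using B[of x u] by (simp only: teq2_formal)
    have t: "teq2 sc (map (\<lambda>(a, b). (a, m b u)) (Delta x)) [(x, u), (one, m x u)]"
      using teq2_map[OF linId linR[of u] F1] by (simp add: U1)
    have k: "basisv (- x, u) + basisv (x, u) \<in> S2 sc" by (rule el_negL) (simp add: neg)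
    show "teq2 sc (Delta (m x u)) ((one, m x u) # map (\<lambda>(a, b). (m x a, b)) (Delta u))"
      using sp_add[OF sp_add[OF b t[unfolded teq2_formal]] k]
      by (simp add: teq2_formal algebra_simps del: funapp)
  qed
  have G2: "teq2 sc (Delta (m (m x y) z)) (map (\<lambda>(a, b). (a, m b z)) (Delta (m x y))
             @ map (\<lambda>(a, b). (m (m x y) a, b)) (Delta z) @ [(- m x y, z)])"
    by (rule B)
  have G3: "teq2 sc (map (\<lambda>(a, b). (a, m b z)) (Delta (m x y)))
              ((one, m (m x y) z) # map (\<lambda>(a, b). (m x a, m b z)) (Delta y))"
    using teq2_map[OF linId linR[of z] A[of y]] by (simp only: list.map prod.case mapLR)
  have G4: "teq2 sc (Delta (m x (m y z))) ((one, m x (m y z)) # map (\<lambda>(a, b). (m x a, b)) (Delta (m y z)))"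
    by (rule A)
  have G5: "teq2 sc (map (\<lambda>(a, b). (m x a, b)) (Delta (m y z)))
     (map (\<lambda>(a, b). (m x a, m b z)) (Delta y) @ map (\<lambda>(a, b). (m x (m y a), b)) (Delta z) @ [(- m x y, z)])"
    using teq2_map[OF linL[of x] linId B[of y z]]
    by (simp only: list.map map_append prod.case mapRL mapLL mneg)
  have eqA: "assoc m x y z = m (m x y) z + - m x (m y z)" by (simp add: assoc_def)
  have G1: "formal (Delta (assoc m x y z)) - formal (Delta (m (m x y) z)) + formal (Delta (m x (m y z))) \<in> S2 sc"
  proof -
    have d1: "formal (Delta (assoc m x y z)) - formal (Delta (m (m x y) z) @ Delta (- m x (m y z))) \<in> S2 sc"
      using Dadd[of "m (m x y) z" "- m x (m y z)"] by (simp only: teq2_formal eqA)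
    have d2: "formal (Delta (- m x (m y z))) - formal (map (\<lambda>(a, b). (- a, b)) (Delta (m x (m y z)))) \<in> S2 sc"
      using Dsc[of "-1" "m x (m y z)"] by (simp add: teq2_formal neg del: funapp)
    have d3: "formal (map (\<lambda>(a, b). (- a, b)) (Delta (m x (m y z)))) + formal (Delta (m x (m y z))) \<in> S2 sc"
      by (rule L_neg[OF VS])
    show ?thesis using sp_add[OF sp_add[OF d1 d2] d3] by (simp add: algebra_simps del: funapp)
  qed
  have G6: "formal (map (\<lambda>(a, b). (assoc m x y a, b)) (Delta z)) - formal (map (\<lambda>(a, b). (m (m x y) a, b)) (Delta z))
           + formal (map (\<lambda>(a, b). (m x (m y a), b)) (Delta z)) \<in> S2 sc"
    by (rule L_diff[OF VS]) (simp add: assoc_def)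
  have G8: "basisv (one, assoc m x y z) - basisv (one, m (m x y) z) + basisv (one, m x (m y z)) \<in> S2 sc"
  proof -
    have k1: "basisv (one, m (m x y) z + - m x (m y z)) - basisv (one, m (m x y) z) - basisv (one, - m x (m y z)) \<in> S2 sc"
      by (rule el_addR)
    have k2: "basisv (one, - m x (m y z)) + basisv (one, m x (m y z)) \<in> S2 sc"
      by (rule el_negR) (simp add: neg)
    show ?thesis using sp_add[OF k1 k2] by (simp add: assoc_def algebra_simps del: funapp)
  qed
  have G9: "basisv (- one, assoc m x y z) + basisv (one, assoc m x y z) \<in> S2 sc"
    by (rule el_negL) (simp add: neg)
  have G10: "teq2 sc (map (\<lambda>(a, b). (assoc m x y a, b)) zs)
     (map (\<lambda>(a, b). (assoc m x y a, b)) (Delta z) @ [(- assoc m x y z, one), (0, z)])"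
    using teq2_map[OF linAs linId zs] by (simp add: rcop_def neg asneg asone)
  have G11: "basisv (0, z) \<in> S2 sc"
    by (rule el_zeroL) (rule module.scale_zero_left[OF MS])
  show ?thesis
    using sp_diff[OF sp_diff[OF sp_diff[OF sp_add[OF sp_diff[OF sp_diff[OF sp_diff[OF sp_add[OF sp_add[OF
      G1 G2[unfolded teq2_formal]] G3[unfolded teq2_formal]] G4[unfolded teq2_formal]] G5[unfolded teq2_formal]]
      G8] G9] G6] G10[unfolded teq2_formal]] G11]
    by (simp add: teq2_formal rcop_def neg algebra_simps del: funapp)
qed

end
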